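(* Let $d\ge2$, $\Lambda>1$, $a\in C^1(\mathbb{T}^d;[1,\Lambda])$ and $F\in\mathbb{R}$. Let $E^*,E_*\subset\mathbb{R}^d$ be open sets such that $\overline{E_*}\subset E^*$ and $\overline{\mathbb{R}^d\setminus\overline{E^*}}=\mathbb{R}^d\setminus E^*$. Define $\overline v=\mathbf{1}_{E^*}$ (lower semicontinuous) and $\underline v=\mathbf{1}_{\overline{E_*}}$ (upper semicontinuous). If $\overline v$ is a viscosity supersolution and $\underline v$ a viscosity subsolution of $$-a(x)\,\mathrm{tr}\big((\mathrm{Id}-\widehat{Du}\otimes\widehat{Du})D^2u\big)-Da(x)\cdot Du-F\|Du\|=0\quad\text{in }\mathbb{R}^d,$$ then there is an open set $E\subset\mathbb{R}^d$ with $E_*\subset E\subset E^*$ such that $\mathbf{1}_E$ is a discontinuous viscosity solution of this equation.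
   Context: $\widehat p=p/|p|$; $a$ is $\mathbb{Z}^d$-periodic. Viscosity sub/supersolutions of this geometric equation are defined in the standard way using the semicontinuous envelopes of the operator at $Du=0$. A discontinuous viscosity solution is a function whose upper semicontinuous envelope is a subsolution and whose lower semicontinuous envelope is a supersolution. *)

theory Defs
  imports "HOL-Analysis.Analysis"
begin

text \<open>Space R^d is represented by real^'n (d = CARD('n)); symmetric-matrix arguments
  of the operator by real^'n^'n; the gradient hat p = p/|p| is sgn p.\<close>

definition geomG :: "(real^'n \<Rightarrow> real) \<Rightarrow> (real^'n \<Rightarrow> real^'n) \<Rightarrow> real
    \<Rightarrow> real^'n \<Rightarrow> real^'n \<Rightarrow> real^'n^'n \<Rightarrow> real" where
  "geomG a Da F x p X =
     - a x * (trace X - sgn p \<bullet> (X *v sgn p)) - Da x \<bullet> p - F * norm p"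

text \<open>Lower and upper semicontinuous envelopes of the operator (relevant at p = 0).\<close>
definition geomG_lower :: "(real^'n \<Rightarrow> real) \<Rightarrow> (real^'n \<Rightarrow> real^'n) \<Rightarrow> real
    \<Rightarrow> real^'n \<Rightarrow> real^'n \<Rightarrow> real^'n^'n \<Rightarrow> ereal" where
  "geomG_lower a Da F x p X =
     Liminf (at (x, p, X) within {(y, q, Y). q \<noteq> 0}) (\<lambda>(y, q, Y). ereal (geomG a Da F y q Y))"

definition geomG_upper :: "(real^'n \<Rightarrow> real) \<Rightarrow> (real^'n \<Rightarrow> real^'n) \<Rightarrow> real
    \<Rightarrow> real^'n \<Rightarrow> real^'n \<Rightarrow> real^'n^'n \<Rightarrow> ereal" where
  "geomG_upper a Da F x p X =
     Limsup (at (x, p, X) within {(y, q, Y). q \<noteq> 0}) (\<lambda>(y, q, Y). ereal (geomG a Da F y q Y))"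

definition C2_test :: "(real^'n \<Rightarrow> real) \<Rightarrow> (real^'n \<Rightarrow> real^'n) \<Rightarrow> (real^'n \<Rightarrow> real^'n^'n) \<Rightarrow> bool" where
  "C2_test \<phi> D\<phi> H\<phi> \<longleftrightarrow>
     (\<forall>x. (\<phi> has_derivative (\<lambda>h. D\<phi> x \<bullet> h)) (at x)) \<and>
     (\<forall>x. (D\<phi> has_derivative (\<lambda>h. H\<phi> x *v h)) (at x)) \<and>
     continuous_on UNIV H\<phi>"

definition usc :: "('a::topological_space \<Rightarrow> real) \<Rightarrow> bool" where
  "usc u \<longleftrightarrow> (\<forall>x t. u x < t \<longrightarrow> eventually (\<lambda>y. u y < t) (at x))"

definition lsc :: "('a::topological_space \<Rightarrow> real) \<Rightarrow> bool" where
  "lsc u \<longleftrightarrow> (\<forall>x t. t < u x \<longrightarrow> eventually (\<lambda>y. t < u y) (at x))"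

definition visc_sub :: "(real^'n \<Rightarrow> real) \<Rightarrow> (real^'n \<Rightarrow> real^'n) \<Rightarrow> real
    \<Rightarrow> (real^'n \<Rightarrow> real) \<Rightarrow> bool" where
  "visc_sub a Da F u \<longleftrightarrow> usc u \<and>
     (\<forall>\<phi> D\<phi> H\<phi> x0. C2_test \<phi> D\<phi> H\<phi> \<and>
        (\<exists>r>0. \<forall>y\<in>ball x0 r. u y - \<phi> y \<le> u x0 - \<phi> x0)
        \<longrightarrow> geomG_lower a Da F x0 (D\<phi> x0) (H\<phi> x0) \<le> 0)"

definition visc_super :: "(real^'n \<Rightarrow> real) \<Rightarrow> (real^'n \<Rightarrow> real^'n) \<Rightarrow> real
    \<Rightarrow> (real^'n \<Rightarrow> real) \<Rightarrow> bool" where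
  "visc_super a Da F u \<longleftrightarrow> lsc u \<and>
     (\<forall>\<phi> D\<phi> H\<phi> x0. C2_test \<phi> D\<phi> H\<phi> \<and>
        (\<exists>r>0. \<forall>y\<in>ball x0 r. u y - \<phi> y \<ge> u x0 - \<phi> x0)
        \<longrightarrow> geomG_upper a Da F x0 (D\<phi> x0) (H\<phi> x0) \<ge> 0)"

definition usc_env :: "('a::topological_space \<Rightarrow> real) \<Rightarrow> 'a \<Rightarrow> real" where
  "usc_env u x = real_of_ereal (Limsup (nhds x) (\<lambda>y. ereal (u y)))"

definition lsc_env :: "('a::topological_space \<Rightarrow> real) \<Rightarrow> 'a \<Rightarrow> real" where
  "lsc_env u x = real_of_ereal (Liminf (nhds x) (\<lambda>y. ereal (u y)))"

definition visc_solution_disc :: "(real^'n \<Rightarrow> real) \<Rightarrow> (real^'n \<Rightarrow> real^'n) \<Rightarrow> real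
    \<Rightarrow> (real^'n \<Rightarrow> real) \<Rightarrow> bool" where
  "visc_solution_disc a Da F u \<longleftrightarrow>
     visc_sub a Da F (usc_env u) \<and> visc_super a Da F (lsc_env u)"

definition Zd_periodic :: "(real^'n \<Rightarrow> real) \<Rightarrow> bool" where
  "Zd_periodic f \<longleftrightarrow> (\<forall>x k. (\<forall>i. k $ i \<in> \<int>) \<longrightarrow> f (x + k) = f x)"

end

theory Submission
  imports Defs
begin

lemma usc_closed: "closed S \<Longrightarrow> usc (indicator S :: 'a::topological_space \<Rightarrow> real)"
  unfolding usc_def
proof (intro allI impI)
  fix x t assume S: "closed S" and xt: "indicator S x < (t::real)"
  show "\<forall>\<^sub>F y in at x. indicator S y < t"
  proof (cases "x \<in> S")
    case True then have "t > 1" using xt by simp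
    then show ?thesis by (intro always_eventually) (simp add: indicator_def)
  next
    case False
    then have "\<forall>\<^sub>F y in at x. y \<in> - S" using S
      by (intro eventually_at_in_open') auto
    then show ?thesis by (rule eventually_mono) (use xt False in auto)
  qed
qed

lemma lsc_open: "open S \<Longrightarrow> lsc (indicator S :: 'a::topological_space \<Rightarrow> real)"
  unfolding lsc_def
proof (intro allI impI)
  fix x t assume S: "open S" and xt: "(t::real) < indicator S x"
  show "\<forall>\<^sub>F y in at x. t < indicator S y"
  proof (cases "x \<in> S")
    case False then have "t < 0" using xt by simp
    then show ?thesis by (intro always_eventually) (simp add: indicator_def)
  next
    case True
    then have "\<forall>\<^sub>F y in at x. y \<in> S" using S
      by (intro eventually_at_in_open') auto
    then show ?thesis by (rule eventually_mono) (use xt True in auto)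
  qed
qed

lemma usc_env_ind: "usc_env (indicator E :: 'a::topological_space \<Rightarrow> real) = indicator (closure E)"
proof
  fix x :: 'a
  show "usc_env (indicator E) x = indicator (closure E) x"
  proof (cases "x \<in> closure E")
    case False
    then have "\<forall>\<^sub>F y in nhds x. y \<in> - closure E"
      by (intro eventually_nhds_in_open) auto
    then have ev: "\<forall>\<^sub>F y in nhds x. ereal (indicator E y) = 0"
      by (rule eventually_mono) (use closure_subset in \<open>auto simp: indicator_def\<close>)
    have "Limsup (nhds x) (\<lambda>y. ereal (indicator E y)) = 0"
      by (rule lim_imp_Limsup) (auto intro: tendsto_eventually[OF ev])
    then show ?thesis using False by (simp add: usc_env_def)
  next
    case True
    have le: "Limsup (nhds x) (\<lambda>y. ereal (indicator E y)) \<le> 1"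
      by (rule Limsup_bounded) (auto simp: indicator_def)
    have ge: "1 \<le> Limsup (nhds x) (\<lambda>y. ereal (indicator E y))"
    proof (rule ccontr)
      assume "\<not> ?thesis"
      then have "Limsup (nhds x) (\<lambda>y. ereal (indicator E y)) < 1" by simp
      from Limsup_lessD[OF this] have "\<forall>\<^sub>F y in nhds x. ereal (indicator E y) < 1" .
      then obtain S where S: "open S" "x \<in> S" "\<forall>y\<in>S. ereal (indicator E y) < 1"
        unfolding eventually_nhds by blast
      then have "\<forall>y\<in>S. y \<notin> E" by (auto simp: indicator_def split: if_splits)
      then have "S \<inter> E = {}" by auto
      with S True show False
        by (metis disjoint_iff open_Int_closure_eq_empty)
    qed
    from le ge have "Limsup (nhds x) (\<lambda>y. ereal (indicator E y)) = 1" by simp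
    then show ?thesis using True by (simp add: usc_env_def)
  qed
qed

lemma lsc_env_ind: "open E \<Longrightarrow> lsc_env (indicator E :: 'a::topological_space \<Rightarrow> real) = indicator E"
proof
  fix x :: 'a assume E: "open E"
  show "lsc_env (indicator E) x = indicator E x"
  proof (cases "x \<in> E")
    case True
    then have "\<forall>\<^sub>F y in nhds x. y \<in> E" using E
      by (intro eventually_nhds_in_open) auto
    then have ev: "\<forall>\<^sub>F y in nhds x. ereal (indicator E y) = 1"
      by (rule eventually_mono) (auto simp: indicator_def)
    have "Liminf (nhds x) (\<lambda>y. ereal (indicator E y)) = 1"
      by (rule lim_imp_Liminf) (auto intro: tendsto_eventually[OF ev])
    then show ?thesis using True by (simp add: lsc_env_def)
  next
    case False
    have ge: "0 \<le> Liminf (nhds x) (\<lambda>y. ereal (indicator E y))"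
      by (rule Liminf_bounded) (auto simp: indicator_def)
    have le: "Liminf (nhds x) (\<lambda>y. ereal (indicator E y)) \<le> 0"
    proof (rule ccontr)
      assume "\<not> ?thesis"
      then have "0 < Liminf (nhds x) (\<lambda>y. ereal (indicator E y))" by simp
      from less_LiminfD[OF this] have "\<forall>\<^sub>F y in nhds x. 0 < ereal (indicator E y)" .
      then have "0 < ereal (indicator E x)" by (rule eventually_nhds_x_imp_x)
      with False show False by simp
    qed
    from le ge have "Liminf (nhds x) (\<lambda>y. ereal (indicator E y)) = 0" by simp
    then show ?thesis using False by (simp add: lsc_env_def)
  qed
qed

lemma Liminf_at_within_lsc:
  fixes f :: "'a::t1_space \<Rightarrow> ereal"
  assumes H: "\<And>U. open U \<Longrightarrow> x0 \<in> U \<Longrightarrow> \<exists>x\<in>U. Liminf (at x within S) f \<le> c"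
  shows "Liminf (at x0 within S) f \<le> c"
proof (rule ccontr)
  assume "\<not> ?thesis"
  then have "c < Liminf (at x0 within S) f" by simp
  then obtain y where y: "c < y" "y < Liminf (at x0 within S) f" using dense by blast
  from less_LiminfD[OF y(2)] have "\<forall>\<^sub>F x in at x0 within S. y < f x" .
  then obtain U where U: "open U" "x0 \<in> U" "\<forall>x\<in>U. x \<noteq> x0 \<longrightarrow> x \<in> S \<longrightarrow> y < f x"
    unfolding eventually_at_topological by blast
  from H[OF U(1,2)] obtain x where x: "x \<in> U" "Liminf (at x within S) f \<le> c" by blast
  show False
  proof (cases "x = x0")
    case True with x y show False by simp
  next
    case False
    have "\<forall>\<^sub>F z in at x within S. y < f z"
      unfolding eventually_at_topological
      by (rule exI[of _ "U - {x0}"]) (use U x False in \<open>auto intro: open_Diff\<close>)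
    then have "y \<le> Liminf (at x within S) f"
      unfolding le_Liminf_iff by (auto elim: eventually_mono)
    with x y show False by simp
  qed
qed

lemma mv_comp: "(A *v x) $ j = (\<Sum>k\<in>UNIV. A$j$k * x$k)"
  by (simp add: matrix_vector_mult_def)

lemma mv_axis: "(A *v axis i 1) $ j = (A $ j $ i :: real)"
  by (simp add: matrix_vector_mult_def axis_def if_distrib cong: if_cong)

lemma trace_proj_nonneg:
  fixes A :: "real^'n^'n" and u :: "real^'n"
  assumes u: "u \<bullet> u = 1" and pos: "\<And>v. v \<bullet> u = 0 \<Longrightarrow> v \<bullet> (A *v v) \<ge> 0"
  shows "trace A - u \<bullet> (A *v u) \<ge> 0"
proof -
  define w where "w i = axis i 1 - u$i *\<^sub>R u" for i
  have wu: "w i \<bullet> u = 0" for i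
    using u by (simp add: w_def inner_diff_left inner_axis')
  have expand: "w i \<bullet> (A *v w i) = A$i$i - u$i * (A *v u)$i - u$i * (\<Sum>j\<in>UNIV. u$j * A$j$i)
      + (u$i)^2 * (u \<bullet> (A *v u))" for i
  proof -
    have a1: "axis i 1 \<bullet> (A *v axis i 1) = A$i$i"
      by (simp add: inner_axis' matrix_vector_mul_component inner_axis)
    have a2: "axis i 1 \<bullet> (A *v u) = (A *v u)$i" by (simp add: inner_axis')
    have a3: "u \<bullet> (A *v axis i 1) = (\<Sum>j\<in>UNIV. u$j * A$j$i)"
      by (simp add: inner_vec_def mv_axis)
    show ?thesis
      unfolding w_def
      by (simp add: algebra_simps inner_diff_left inner_diff_right a1 a2 a3 power2_eq_square)
  qed
  have s1: "(\<Sum>i\<in>UNIV. A$i$i) = trace A" by (simp add: trace_def)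
  have s2: "(\<Sum>i\<in>UNIV. u$i * (A *v u)$i) = u \<bullet> (A *v u)" by (simp add: inner_vec_def)
  have s3: "(\<Sum>i\<in>UNIV. u$i * (\<Sum>j\<in>UNIV. u$j * A$j$i)) = u \<bullet> (A *v u)"
  proof -
    have "(\<Sum>i\<in>UNIV. u$i * (\<Sum>j\<in>UNIV. u$j * A$j$i)) = (\<Sum>i\<in>UNIV. \<Sum>j\<in>UNIV. u$j * (A$j$i * u$i))"
      by (simp add: sum_distrib_left algebra_simps)
    also have "\<dots> = (\<Sum>j\<in>UNIV. \<Sum>i\<in>UNIV. u$j * (A$j$i * u$i))" by (rule sum.swap)
    also have "\<dots> = u \<bullet> (A *v u)"
      by (simp add: inner_vec_def mv_comp sum_distrib_left)
    finally show ?thesis .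
  qed
  have s4: "(\<Sum>i\<in>UNIV. (u$i)^2) = 1" using u by (simp add: inner_vec_def power2_eq_square)
  have "(\<Sum>i\<in>UNIV. w i \<bullet> (A *v w i)) = trace A - u \<bullet> (A *v u)"
  proof -
    have "(\<Sum>i\<in>UNIV. w i \<bullet> (A *v w i)) = (\<Sum>i\<in>UNIV. A$i$i) - (\<Sum>i\<in>UNIV. u$i * (A *v u)$i)
      - (\<Sum>i\<in>UNIV. u$i * (\<Sum>j\<in>UNIV. u$j * A$j$i)) + (\<Sum>i\<in>UNIV. (u$i)^2) * (u \<bullet> (A *v u))"
      by (simp add: expand sum.distrib sum_subtractf sum_distrib_right)
    then show ?thesis using s1 s2 s3 s4 by simp
  qed
  moreover have "(\<Sum>i\<in>UNIV. w i \<bullet> (A *v w i)) \<ge> 0"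
    by (rule sum_nonneg) (use pos wu in auto)
  ultimately show ?thesis by simp
qed

lemma sgn_pos_scaleR: "(c::real) > 0 \<Longrightarrow> sgn (c *\<^sub>R (x::'a::real_normed_vector)) = sgn x"
  by (simp add: sgn_scaleR)

lemma G_lower_bound:
  fixes P :: "real^'n" and H :: "real^'n^'n"
  assumes P: "P \<noteq> 0" and mu: "\<mu> \<ge> 0"
  shows "geomG_lower a Da F z (\<mu> *\<^sub>R P) H \<le>
    ereal (- a z * (trace H - sgn P \<bullet> (H *v sgn P)) - \<mu> * (Da z \<bullet> P + F * norm P))"
    (is "_ \<le> ereal ?L")
proof (rule ccontr)
  let ?S = "{(y, q, Y). q \<noteq> (0::real^'n)} :: ((real^'n) \<times> (real^'n) \<times> (real^'n^'n)) set"
  let ?f = "\<lambda>(y, q, Y). ereal (geomG a Da F y q Y)"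
  define c where "c k = inverse (real (Suc k))" for k
  define s where "s k = (z, (\<mu> + c k) *\<^sub>R P, H)" for k
  have cpos: "c k > 0" for k by (simp add: c_def)
  have c0: "c \<longlonglongrightarrow> 0" unfolding c_def by (rule LIMSEQ_inverse_real_of_nat)
  have mc: "(\<lambda>k. \<mu> + c k) \<longlonglongrightarrow> \<mu>" using tendsto_add[OF tendsto_const c0, of \<mu>] by simp
  assume "\<not> ?thesis"
  then have "ereal ?L < geomG_lower a Da F z (\<mu> *\<^sub>R P) H" by simp
  then obtain y where y: "ereal ?L < y" "y < geomG_lower a Da F z (\<mu> *\<^sub>R P) H"
    using dense by blast
  from less_LiminfD[OF y(2)[unfolded geomG_lower_def]]
  have ev: "\<forall>\<^sub>F w in at (z, \<mu> *\<^sub>R P, H) within ?S. y < ?f w" .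
  have lim_s: "filterlim s (at (z, \<mu> *\<^sub>R P, H) within ?S) sequentially"
    unfolding filterlim_at
  proof
    show "\<forall>\<^sub>F k in sequentially. s k \<in> ?S \<and> s k \<noteq> (z, \<mu> *\<^sub>R P, H)"
    proof (intro always_eventually allI)
      fix k
      have "(\<mu> + c k) *\<^sub>R P \<noteq> 0" using P cpos[of k] mu by simp
      moreover have "(\<mu> + c k) *\<^sub>R P \<noteq> \<mu> *\<^sub>R P"
      proof
        assume "(\<mu> + c k) *\<^sub>R P = \<mu> *\<^sub>R P"
        then have "c k *\<^sub>R P = 0" by (simp add: algebra_simps)
        with P cpos[of k] show False by simp
      qed
      ultimately show "s k \<in> ?S \<and> s k \<noteq> (z, \<mu> *\<^sub>R P, H)" by (simp add: s_def)
    qed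
    show "s \<longlonglongrightarrow> (z, \<mu> *\<^sub>R P, H)"
      unfolding s_def using mc
      by (intro tendsto_intros)
  qed
  have ev2: "\<forall>\<^sub>F k in sequentially. y < ?f (s k)"
    using filterlim_iff[THEN iffD1, OF lim_s, rule_format, OF ev] .
  have fs: "?f (s k) = ereal (- a z * (trace H - sgn P \<bullet> (H *v sgn P)) - (\<mu> + c k) * (Da z \<bullet> P + F * norm P))" for k
  proof -
    have pos: "\<mu> + c k > 0" using cpos[of k] mu by simp
    have 1: "sgn ((\<mu> + c k) *\<^sub>R P) = sgn P" using pos by (rule sgn_pos_scaleR)
    have 2: "norm ((\<mu> + c k) *\<^sub>R P) = (\<mu> + c k) * norm P" using pos by simp
    show ?thesis
      unfolding s_def by (simp only: case_prod_conv geomG_def 1 2 inner_scaleR_right) (simp add: algebra_simps)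
  qed
  have "((\<lambda>k. - a z * (trace H - sgn P \<bullet> (H *v sgn P)) - (\<mu> + c k) * (Da z \<bullet> P + F * norm P)) \<longlongrightarrow> ?L) sequentially"
    using mc by (auto intro!: tendsto_intros)
  then have "((\<lambda>k. ?f (s k)) \<longlongrightarrow> ereal ?L) sequentially"
    unfolding fs by (simp add: lim_ereal)
  then have "\<forall>\<^sub>F k in sequentially. ?f (s k) < y"
    using y(1) by (rule order_tendstoD)
  with ev2 have "\<forall>\<^sub>F k in sequentially. False"
    by eventually_elim auto
  then show False by simp
qed

lemma curve_deriv:
  assumes C2: "C2_test \<eta> D\<eta> H\<eta>"
  shows "((\<lambda>t. \<eta> (z + t *\<^sub>R v + (t^2) *\<^sub>R w)) has_real_derivative
           (D\<eta> (z + t *\<^sub>R v + (t^2) *\<^sub>R w) \<bullet> (v + (2*t) *\<^sub>R w))) (at t)"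
proof -
  have d1: "((\<lambda>t. z + t *\<^sub>R v + (t^2) *\<^sub>R w) has_derivative (\<lambda>s. s *\<^sub>R (v + (2*t) *\<^sub>R w))) (at t)"
    by (auto intro!: derivative_eq_intros simp: algebra_simps)
  have d2: "(\<eta> has_derivative (\<lambda>h. D\<eta> ((\<lambda>t. z + t *\<^sub>R v + (t^2) *\<^sub>R w) t) \<bullet> h))
      (at ((\<lambda>t. z + t *\<^sub>R v + (t^2) *\<^sub>R w) t))"
    using C2 by (simp add: C2_test_def)
  show ?thesis
    unfolding has_field_derivative_def
    by (rule has_derivative_eq_rhs[OF has_derivative_compose[OF d1 d2]])
       (simp add: fun_eq_iff mult.commute)
qed

lemma curve_deriv2:
  assumes C2: "C2_test \<eta> D\<eta> H\<eta>"
  shows "((\<lambda>t. D\<eta> (z + t *\<^sub>R v + (t^2) *\<^sub>R w) \<bullet> (v + (2*t) *\<^sub>R w)) has_real_derivative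
           ((H\<eta> z *v v) \<bullet> v + 2 * (D\<eta> z \<bullet> w))) (at 0)"
proof -
  have d1: "((\<lambda>t. z + t *\<^sub>R v + (t^2) *\<^sub>R w) has_derivative (\<lambda>s. s *\<^sub>R (v + (2*0) *\<^sub>R w))) (at (0::real))"
    by (auto intro!: derivative_eq_intros simp: algebra_simps)
  have d2: "(D\<eta> has_derivative (\<lambda>h. H\<eta> ((\<lambda>t. z + t *\<^sub>R v + (t^2) *\<^sub>R w) 0) *v h))
      (at ((\<lambda>t. z + t *\<^sub>R v + (t^2) *\<^sub>R w) 0))"
    using C2 by (simp add: C2_test_def)
  have d3: "((\<lambda>t. D\<eta> (z + t *\<^sub>R v + (t^2) *\<^sub>R w)) has_derivative (\<lambda>s. H\<eta> z *v (s *\<^sub>R v))) (at 0)"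
    using has_derivative_compose[OF d1 d2] by simp
  have d4: "((\<lambda>t::real. v + (2*t) *\<^sub>R w) has_derivative (\<lambda>s. s *\<^sub>R (2 *\<^sub>R w))) (at 0)"
    by (auto intro!: derivative_eq_intros simp: algebra_simps)
  show ?thesis
    unfolding has_field_derivative_def
    by (rule has_derivative_eq_rhs[OF has_derivative_inner[OF d3 d4]])
       (simp add: fun_eq_iff algebra_simps matrix_vector_mult_scaleR)
qed

lemma first_order:
  assumes C2: "C2_test \<eta> D\<eta> H\<eta>"
    and ev: "\<exists>d>0. \<forall>t. 0 < t \<and> t < d \<longrightarrow> \<eta> (z + t *\<^sub>R v) \<ge> \<eta> z"
  shows "D\<eta> z \<bullet> v \<ge> 0"
proof (rule ccontr)
  assume "\<not> ?thesis"
  then have neg: "D\<eta> z \<bullet> v < 0" by simp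
  have "((\<lambda>t. \<eta> (z + t *\<^sub>R v + (t^2) *\<^sub>R 0)) has_real_derivative
           (D\<eta> (z + 0 *\<^sub>R v + (0^2) *\<^sub>R 0) \<bullet> (v + (2*0) *\<^sub>R 0))) (at 0)"
    by (rule curve_deriv[OF C2])
  then have "((\<lambda>t. \<eta> (z + t *\<^sub>R v)) has_real_derivative (D\<eta> z \<bullet> v)) (at 0)" by simp
  from DERIV_neg_dec_right[OF this neg] obtain d' where d': "d' > 0"
    "\<forall>h>0. h < d' \<longrightarrow> \<eta> (z + 0 *\<^sub>R v) > \<eta> (z + (0 + h) *\<^sub>R v)" by blast
  from ev obtain d where d: "d > 0" "\<forall>t. 0 < t \<and> t < d \<longrightarrow> \<eta> (z + t *\<^sub>R v) \<ge> \<eta> z" by blast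
  let ?h = "min d d' / 2"
  have "\<eta> z > \<eta> (z + ?h *\<^sub>R v)" using d'(2)[rule_format, of ?h] d d' by simp
  moreover have "\<eta> (z + ?h *\<^sub>R v) \<ge> \<eta> z" using d(2)[rule_format, of ?h] d d' by simp
  ultimately show False by simp
qed

lemma second_order:
  assumes C2: "C2_test \<eta> D\<eta> H\<eta>" and v0: "D\<eta> z \<bullet> v = 0"
    and ev: "\<exists>d>0. \<forall>t. 0 < t \<and> t < d \<longrightarrow> \<eta> (z + t *\<^sub>R v + (t^2) *\<^sub>R w) \<ge> \<eta> z"
  shows "(H\<eta> z *v v) \<bullet> v + 2 * (D\<eta> z \<bullet> w) \<ge> 0"
proof (rule ccontr)
  define g where "g t = \<eta> (z + t *\<^sub>R v + (t^2) *\<^sub>R w)" for t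
  define g' where "g' t = D\<eta> (z + t *\<^sub>R v + (t^2) *\<^sub>R w) \<bullet> (v + (2*t) *\<^sub>R w)" for t
  have dg: "(g has_real_derivative g' t) (at t)" for t
    unfolding g_def g'_def by (rule curve_deriv[OF C2])
  have g'0: "g' 0 = 0" using v0 by (simp add: g'_def)
  assume "\<not> ?thesis"
  then have neg: "(H\<eta> z *v v) \<bullet> v + 2 * (D\<eta> z \<bullet> w) < 0" by simp
  have "(g' has_real_derivative ((H\<eta> z *v v) \<bullet> v + 2 * (D\<eta> z \<bullet> w))) (at 0)"
    unfolding g'_def by (rule curve_deriv2[OF C2])
  from DERIV_neg_dec_right[OF this neg] obtain d' where d': "d' > 0"
    "\<forall>h>0. h < d' \<longrightarrow> g' 0 > g' (0 + h)" by blast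
  from ev obtain d where d: "d > 0" "\<forall>t. 0 < t \<and> t < d \<longrightarrow> g t \<ge> g 0"
    unfolding g_def by auto
  let ?h = "min d d' / 2"
  have hpos: "?h > 0" using d d' by simp
  have "g 0 > g ?h"
  proof (rule DERIV_neg_imp_decreasing_open[OF hpos])
    fix x assume x: "0 < x" "x < ?h"
    show "\<exists>y. DERIV g x :> y \<and> y < 0"
      using dg[of x] d'(2)[rule_format, of x] x g'0 by auto
  next
    show "continuous_on {0..?h} g"
      using dg by (meson DERIV_continuous continuous_at_imp_continuous_on)
  qed
  moreover have "g ?h \<ge> g 0" using d(2)[rule_format, of ?h] d d' by simp
  ultimately show False by simp
qed

lemma taylor2:
  assumes C2: "C2_test \<phi> D\<phi> H\<phi>" and e: "e > 0"
  shows "\<exists>\<rho>>0. \<forall>h. norm h < \<rho> \<longrightarrow>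
    \<bar>\<phi> (x + h) - \<phi> x - D\<phi> x \<bullet> h - (1/2) * (h \<bullet> (H\<phi> x *v h))\<bar> \<le> e * (norm h)^2"
proof -
  have "(D\<phi> has_derivative (\<lambda>h. H\<phi> x *v h)) (at x)" using C2 by (simp add: C2_test_def)
  then obtain \<rho> where \<rho>: "\<rho> > 0"
    "\<forall>y. norm (y - x) < \<rho> \<longrightarrow> norm (D\<phi> y - D\<phi> x - H\<phi> x *v (y - x)) \<le> e * norm (y - x)"
    unfolding has_derivative_at_alt using e by blast
  show ?thesis
  proof (intro exI[of _ \<rho>] conjI allI impI)
    show "\<rho> > 0" by fact
    fix h :: "real^'a" assume h: "norm h < \<rho>"
    define R where "R t = \<phi> (x + t *\<^sub>R h + (t^2) *\<^sub>R 0) - t * (D\<phi> x \<bullet> h) - (1/2) * t^2 * (h \<bullet> (H\<phi> x *v h))" for t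
    define R' where "R' t = D\<phi> (x + t *\<^sub>R h + (t^2) *\<^sub>R 0) \<bullet> (h + (2*t) *\<^sub>R 0) - D\<phi> x \<bullet> h - t * (h \<bullet> (H\<phi> x *v h))" for t
    have dR: "(R has_real_derivative R' t) (at t)" for t
      unfolding R_def R'_def
      by (rule derivative_eq_intros curve_deriv[OF C2] | simp)+
    obtain s where s: "0 < s" "s < 1" "R 1 - R 0 = (1 - 0) * R' s"
      using MVT2[of 0 1 R R'] dR by auto
    have "R' s = (D\<phi> (x + s *\<^sub>R h) - D\<phi> x - H\<phi> x *v (s *\<^sub>R h)) \<bullet> h"
      by (simp add: R'_def algebra_simps matrix_vector_mult_scaleR inner_commute)
    then have "\<bar>R' s\<bar> \<le> norm (D\<phi> (x + s *\<^sub>R h) - D\<phi> x - H\<phi> x *v (s *\<^sub>R h)) * norm h"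
      using Cauchy_Schwarz_ineq2 by simp
    also have "\<dots> \<le> (e * norm (s *\<^sub>R h)) * norm h"
    proof (rule mult_right_mono)
      have "norm (s *\<^sub>R h) < \<rho>" using s h by simp (smt (verit) mult_left_le_one_le norm_ge_zero)
      then show "norm (D\<phi> (x + s *\<^sub>R h) - D\<phi> x - H\<phi> x *v (s *\<^sub>R h)) \<le> e * norm (s *\<^sub>R h)"
        using \<rho>(2)[rule_format, of "x + s *\<^sub>R h"] by simp
    qed simp
    also have "\<dots> \<le> e * (norm h)^2"
      using s e by (simp add: power2_eq_square mult_le_cancel_left mult_left_le_one_le)
    finally have "\<bar>R' s\<bar> \<le> e * (norm h)^2" .
    moreover have "R 1 - R 0 = \<phi> (x + h) - \<phi> x - D\<phi> x \<bullet> h - (1/2) * (h \<bullet> (H\<phi> x *v h))"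
      by (simp add: R_def)
    ultimately show "\<bar>\<phi> (x + h) - \<phi> x - D\<phi> x \<bullet> h - (1/2) * (h \<bullet> (H\<phi> x *v h))\<bar> \<le> e * (norm h)^2"
      using s by simp
  qed
qed

lemma quad_expand:
  fixes M :: "real^'n^'n"
  shows "(a *\<^sub>R v + b *\<^sub>R w) \<bullet> (M *v (a *\<^sub>R v + b *\<^sub>R w)) =
    a^2 * (v \<bullet> (M *v v)) + a * b * (v \<bullet> (M *v w) + w \<bullet> (M *v v)) + b^2 * (w \<bullet> (M *v w))"
  by (simp add: algebra_simps matrix_vector_mult_scaleR inner_add_left inner_add_right power2_eq_square)

lemma level_set:
  fixes P :: "real^'n" and M :: "real^'n^'n"
  assumes C2: "C2_test \<eta> D\<eta> H\<eta>" and P: "P \<noteq> 0"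
    and q: "\<And>k. q (z + k) = q z + P \<bullet> k + (1/2) * (k \<bullet> (M *v k))"
    and loc: "\<exists>r>0. \<forall>y\<in>ball z r. q y > q z \<longrightarrow> \<eta> y \<ge> \<eta> z"
  shows "\<exists>\<mu>\<ge>0. D\<eta> z = \<mu> *\<^sub>R P \<and> (\<forall>v. v \<bullet> P = 0 \<longrightarrow> v \<bullet> (H\<eta> z *v v) \<ge> \<mu> * (v \<bullet> (M *v v)))"
proof -
  obtain r where r: "r > 0" "\<forall>y\<in>ball z r. q y > q z \<longrightarrow> \<eta> y \<ge> \<eta> z" using loc by blast
  have PP: "P \<bullet> P > 0" using P by simp
  have FO: "D\<eta> z \<bullet> v \<ge> 0" if Pv: "P \<bullet> v > 0" for v
  proof (rule first_order[OF C2])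
    define d where "d = min (r / (norm v + 1)) ((P \<bullet> v) / (\<bar>v \<bullet> (M *v v)\<bar> + 1))"
    have dpos: "d > 0" using r Pv by (auto simp: d_def intro!: divide_pos_pos add_nonneg_pos)
    show "\<exists>d>0. \<forall>t. 0 < t \<and> t < d \<longrightarrow> \<eta> (z + t *\<^sub>R v) \<ge> \<eta> z"
    proof (intro exI[of _ d] conjI allI impI dpos)
      fix t assume t: "0 < t \<and> t < d"
      have nv: "norm v + 1 > 0" "\<bar>v \<bullet> (M *v v)\<bar> + 1 > 0" by (simp_all add: add_nonneg_pos)
      have t1: "t * (norm v + 1) < r" using t nv by (simp add: d_def pos_less_divide_eq)
      have t2: "t * (\<bar>v \<bullet> (M *v v)\<bar> + 1) < P \<bullet> v"
        using t nv by (simp add: d_def pos_less_divide_eq)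
      have "norm (t *\<^sub>R v) < r" using t t1 by (simp add: algebra_simps) 
      then have inb: "z + t *\<^sub>R v \<in> ball z r" by (simp add: dist_norm)
      have "q (z + t *\<^sub>R v) - q z = t * (P \<bullet> v + (1/2) * t * (v \<bullet> (M *v v)))"
        by (simp add: q matrix_vector_mult_scaleR algebra_simps power2_eq_square)
      moreover have "P \<bullet> v + (1/2) * t * (v \<bullet> (M *v v)) > 0"
      proof -
        have "\<bar>t * (v \<bullet> (M *v v))\<bar> \<le> t * (\<bar>v \<bullet> (M *v v)\<bar> + 1)" using t by (simp add: abs_mult)
        moreover have "- (t * (v \<bullet> (M *v v))) \<le> \<bar>t * (v \<bullet> (M *v v))\<bar>" by (rule abs_ge_minus_self)
        moreover have "1/2 * t * (v \<bullet> (M *v v)) = (t * (v \<bullet> (M *v v))) / 2" by simp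
        ultimately show ?thesis using t2 by linarith
      qed
      ultimately have "q (z + t *\<^sub>R v) - q z > 0" using t by (metis mult_pos_pos)
      then have "q (z + t *\<^sub>R v) > q z" by simp
      then show "\<eta> (z + t *\<^sub>R v) \<ge> \<eta> z" using r(2) inb by blast
    qed
  qed
  define c where "c = D\<eta> z \<bullet> P"
  have c0: "c \<ge> 0" unfolding c_def using FO[of P] PP by simp
  have orth_half: "D\<eta> z \<bullet> v \<ge> 0" if v: "v \<bullet> P = 0" for v
  proof (rule ccontr)
    assume "\<not> ?thesis"
    then have neg: "D\<eta> z \<bullet> v < 0" by simp
    define s where "s = - (D\<eta> z \<bullet> v) / (2 * (c + 1))"
    have spos: "s > 0" unfolding s_def using neg c0 by (intro divide_pos_pos) auto
    have "P \<bullet> (v + s *\<^sub>R P) > 0" using v spos PP by (simp add: inner_add_right inner_commute)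
    then have "D\<eta> z \<bullet> (v + s *\<^sub>R P) \<ge> 0" by (rule FO)
    then have "D\<eta> z \<bullet> v + s * c \<ge> 0" by (simp add: inner_add_right c_def)
    moreover have "s * c \<le> - (D\<eta> z \<bullet> v) / 2"
    proof -
      have "s * c = - (D\<eta> z \<bullet> v) * (c / (2 * (c + 1)))" by (simp add: s_def)
      also have "\<dots> \<le> - (D\<eta> z \<bullet> v) * (1/2)"
        using neg c0 by (intro mult_left_mono) (auto simp: field_simps)
      finally show ?thesis by simp
    qed
    ultimately show False using neg by simp
  qed
  have orth: "D\<eta> z \<bullet> v = 0" if v: "v \<bullet> P = 0" for v
    using orth_half[OF v] orth_half[of "-v"] v by simp
  define \<mu> where "\<mu> = c / (P \<bullet> P)"
  have mu0: "\<mu> \<ge> 0" using c0 PP by (simp add: \<mu>_def)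
  have Deq: "D\<eta> z = \<mu> *\<^sub>R P"
  proof -
    define w where "w = D\<eta> z - \<mu> *\<^sub>R P"
    have wP: "w \<bullet> P = 0" using PP by (simp add: w_def \<mu>_def c_def inner_diff_left)
    have "w \<bullet> w = D\<eta> z \<bullet> w - \<mu> * (P \<bullet> w)" by (simp add: w_def inner_diff_left)
    also have "\<dots> = 0" using orth[OF wP] wP by (simp add: inner_commute)
    finally show ?thesis by (simp add: w_def)
  qed
  have SO: "v \<bullet> (H\<eta> z *v v) \<ge> \<mu> * (v \<bullet> (M *v v))" if vP: "v \<bullet> P = 0" for v
  proof -
    have key: "v \<bullet> (H\<eta> z *v v) \<ge> \<mu> * (v \<bullet> (M *v v)) - 2 * \<mu> * \<epsilon>" if e: "\<epsilon> > 0" for \<epsilon>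
    proof -
      define \<beta> where "\<beta> = (\<epsilon> - (1/2) * (v \<bullet> (M *v v))) / (P \<bullet> P)"
      define w where "w = \<beta> *\<^sub>R P"
      have Pw: "P \<bullet> w = \<epsilon> - (1/2) * (v \<bullet> (M *v v))" using PP by (simp add: w_def \<beta>_def)
      define B where "B = v \<bullet> (M *v w) + w \<bullet> (M *v v)"
      define C where "C = w \<bullet> (M *v w)"
      define d where "d = min 1 (min (r / (norm v + norm w + 1)) (\<epsilon> / (\<bar>B\<bar> + \<bar>C\<bar> + 1)))"
      have dpos: "d > 0" using r e by (auto simp: d_def intro!: divide_pos_pos add_nonneg_pos)
      have "(H\<eta> z *v v) \<bullet> v + 2 * (D\<eta> z \<bullet> w) \<ge> 0"
      proof (rule second_order[OF C2])
        show "D\<eta> z \<bullet> v = 0" using orth[OF vP] .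
        show "\<exists>d>0. \<forall>t. 0 < t \<and> t < d \<longrightarrow> \<eta> (z + t *\<^sub>R v + t\<^sup>2 *\<^sub>R w) \<ge> \<eta> z"
        proof (intro exI[of _ d] conjI allI impI dpos)
          fix t assume t: "0 < t \<and> t < d"
          have t0: "t < 1" using t by (simp add: d_def)
          have nv: "norm v + norm w + 1 > 0" "\<bar>B\<bar> + \<bar>C\<bar> + 1 > 0" by (simp_all add: add_nonneg_pos)
          have t1: "t * (norm v + norm w + 1) < r" using t nv by (simp add: d_def pos_less_divide_eq)
          have t2: "t * (\<bar>B\<bar> + \<bar>C\<bar> + 1) < \<epsilon>" using t nv by (simp add: d_def pos_less_divide_eq)
          have "norm (t *\<^sub>R v + t\<^sup>2 *\<^sub>R w) \<le> norm (t *\<^sub>R v) + norm (t\<^sup>2 *\<^sub>R w)"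
            by (rule norm_triangle_ineq)
          also have "\<dots> = t * norm v + t^2 * norm w" using t by simp
          also have "\<dots> \<le> t * norm v + t * norm w"
            using t t0 by (simp add: power2_eq_square mult_right_le_one_le mult_left_le_one_le mult_right_mono)
          also have "\<dots> < r" using t1 t by (simp add: algebra_simps)
          finally have nr: "norm (t *\<^sub>R v + t\<^sup>2 *\<^sub>R w) < r" .
          have "z - (z + t *\<^sub>R v + t\<^sup>2 *\<^sub>R w) = - (t *\<^sub>R v + t\<^sup>2 *\<^sub>R w)" by simp
          then have "z + t *\<^sub>R v + t\<^sup>2 *\<^sub>R w \<in> ball z r" using nr
            unfolding mem_ball dist_norm by (metis norm_minus_cancel)
          moreover have "q (z + t *\<^sub>R v + t\<^sup>2 *\<^sub>R w) > q z"
          proof -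
            have "q (z + t *\<^sub>R v + t\<^sup>2 *\<^sub>R w) - q z
               = P \<bullet> (t *\<^sub>R v + t\<^sup>2 *\<^sub>R w) + (1/2) * ((t *\<^sub>R v + t\<^sup>2 *\<^sub>R w) \<bullet> (M *v (t *\<^sub>R v + t\<^sup>2 *\<^sub>R w)))"
              using q[of "t *\<^sub>R v + t\<^sup>2 *\<^sub>R w"] by (simp add: add.assoc)
            also have "\<dots> = t^2 * (\<epsilon> + (1/2) * t * B + (1/2) * t^2 * C)"
              unfolding quad_expand B_def C_def
              using vP by (simp add: inner_add_right inner_commute Pw algebra_simps power2_eq_square power3_eq_cube)
            finally have eq: "q (z + t *\<^sub>R v + t\<^sup>2 *\<^sub>R w) - q z = t^2 * (\<epsilon> + (1/2) * t * B + (1/2) * t^2 * C)" .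
            have "\<bar>(1/2) * t * B + (1/2) * t^2 * C\<bar> \<le> (1/2) * t * (\<bar>B\<bar> + \<bar>C\<bar>)"
            proof -
              have "\<bar>t^2 * C\<bar> \<le> t * \<bar>C\<bar>"
                using t t0 by (simp add: abs_mult power2_eq_square mult_left_le_one_le mult_right_le_one_le mult_le_cancel_right)
              moreover have "\<bar>(1/2) * t * B + (1/2) * t^2 * C\<bar> \<le> \<bar>(1/2) * t * B\<bar> + \<bar>(1/2) * t^2 * C\<bar>"
                by (rule abs_triangle_ineq)
              moreover have "\<bar>(1/2) * t * B\<bar> = (1/2) * t * \<bar>B\<bar>" using t by (simp add: abs_mult)
              moreover have "\<bar>(1/2) * t^2 * C\<bar> = (1/2) * \<bar>t^2 * C\<bar>" by (simp add: abs_mult)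
              ultimately show ?thesis by (simp add: algebra_simps)
            qed
            moreover have "(1/2) * t * (\<bar>B\<bar> + \<bar>C\<bar>) < \<epsilon>"
            proof -
              have "t * (\<bar>B\<bar> + \<bar>C\<bar>) \<le> t * (\<bar>B\<bar> + \<bar>C\<bar> + 1)" using t by simp
              moreover have "t * (\<bar>B\<bar> + \<bar>C\<bar>) \<ge> 0" using t by simp
              ultimately show ?thesis using t2 by linarith
            qed
            ultimately have "\<epsilon> + (1/2) * t * B + (1/2) * t^2 * C > 0" by linarith
            then have "t^2 * (\<epsilon> + (1/2) * t * B + (1/2) * t^2 * C) > 0" using t by simp
            with eq show ?thesis by simp
          qed
          ultimately show "\<eta> (z + t *\<^sub>R v + t\<^sup>2 *\<^sub>R w) \<ge> \<eta> z" using r(2) by blast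
        qed
      qed
      moreover have "D\<eta> z \<bullet> w = \<mu> * (\<epsilon> - (1/2) * (v \<bullet> (M *v v)))"
        using Deq Pw by simp
      ultimately show ?thesis by (simp add: inner_commute algebra_simps)
    qed
    show ?thesis
    proof (rule field_le_epsilon)
      fix e :: real assume e: "e > 0"
      have "v \<bullet> (H\<eta> z *v v) \<ge> \<mu> * (v \<bullet> (M *v v)) - 2 * \<mu> * (e / (2 * \<mu> + 2))"
        using key[of "e / (2 * \<mu> + 2)"] e mu0 by simp
      moreover have "2 * \<mu> * (e / (2 * \<mu> + 2)) \<le> e"
        using e mu0 by (simp add: field_simps)
      ultimately show "\<mu> * (v \<bullet> (M *v v)) \<le> v \<bullet> (H\<eta> z *v v) + e" by simp
    qed
  qed
  show ?thesis using mu0 Deq SO by blast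
qed

lemma trace_scaleR: "trace (c *\<^sub>R (A::real^'n^'n)) = c * trace A"
  by (simp add: trace_def sum_distrib_left)

lemma dist3_le:
  fixes a a' :: "'a::metric_space" and b b' :: "'b::metric_space" and c c' :: "'c::metric_space"
  shows "dist (a, b, c) (a', b', c') \<le> dist a a' + dist b b' + dist c c'"
proof -
  have sq: "sqrt (x\<^sup>2 + y\<^sup>2) \<le> x + y" if "x \<ge> 0" "y \<ge> 0" for x y :: real
  proof -
    have "x\<^sup>2 + y\<^sup>2 \<le> (x + y)\<^sup>2" using that by (simp add: power2_eq_square algebra_simps)
    then have "sqrt (x\<^sup>2 + y\<^sup>2) \<le> sqrt ((x + y)\<^sup>2)" by (rule real_sqrt_le_mono)
    then show ?thesis using that by simp
  qed
  have "dist (b, c) (b', c') \<le> dist b b' + dist c c'"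
    unfolding dist_Pair_Pair by (rule sq) auto
  moreover have "dist (a, b, c) (a', b', c') \<le> dist a a' + dist (b, c) (b', c')"
    unfolding dist_Pair_Pair[of a "(b,c)"] by (rule sq) auto
  ultimately show ?thesis by simp
qed

lemma C2_perturb:
  fixes \<eta> :: "real^'n \<Rightarrow> real"
  assumes C2: "C2_test \<eta> D\<eta> H\<eta>"
  shows "C2_test (\<lambda>y. \<eta> y + \<epsilon> * ((y - z) \<bullet> (y - z))) (\<lambda>y. D\<eta> y + (2 * \<epsilon>) *\<^sub>R (y - z))
     (\<lambda>y. H\<eta> y + (2 * \<epsilon>) *\<^sub>R mat 1)"
  unfolding C2_test_def
proof (intro conjI allI)
  fix x
  have "(\<eta> has_derivative (\<lambda>h. D\<eta> x \<bullet> h)) (at x)" using C2 by (simp add: C2_test_def)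
  then show "((\<lambda>y. \<eta> y + \<epsilon> * ((y - z) \<bullet> (y - z))) has_derivative
      (\<lambda>h. (D\<eta> x + (2 * \<epsilon>) *\<^sub>R (x - z)) \<bullet> h)) (at x)"
    by (auto intro!: derivative_eq_intros simp: algebra_simps inner_commute fun_eq_iff)
  have "(D\<eta> has_derivative (\<lambda>h. H\<eta> x *v h)) (at x)" using C2 by (simp add: C2_test_def)
  then show "((\<lambda>y. D\<eta> y + (2 * \<epsilon>) *\<^sub>R (y - z)) has_derivative
      (\<lambda>h. (H\<eta> x + (2 * \<epsilon>) *\<^sub>R mat 1) *v h)) (at x)"
    by (auto intro!: derivative_eq_intros simp: algebra_simps fun_eq_iff scaleR_matrix_vector_assoc[symmetric])
next
  have "continuous_on UNIV H\<eta>" using C2 by (simp add: C2_test_def)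
  then show "continuous_on UNIV (\<lambda>y. H\<eta> y + (2 * \<epsilon>) *\<^sub>R mat 1)"
    by (intro continuous_intros)
qed

lemma C2_cont: "C2_test \<eta> D\<eta> H\<eta> \<Longrightarrow> continuous_on UNIV \<eta>"
  unfolding C2_test_def using has_derivative_continuous
  by (metis continuous_at_imp_continuous_on)

lemma C2_contD: "C2_test \<eta> D\<eta> H\<eta> \<Longrightarrow> continuous_on UNIV D\<eta>"
  unfolding C2_test_def using has_derivative_continuous
  by (metis continuous_at_imp_continuous_on)

lemma localmax_in:
  fixes \<eta> :: "'a::metric_space \<Rightarrow> real"
  assumes "\<exists>r>0. \<forall>y\<in>ball z r. indicator C y - \<eta> y \<le> indicator C z - \<eta> z" "z \<in> C"
  shows "\<exists>r>0. \<forall>y\<in>ball z r. y \<in> C \<longrightarrow> \<eta> y \<ge> \<eta> z"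
proof -
  obtain r where r: "r > 0" "\<forall>y\<in>ball z r. indicator C y - \<eta> y \<le> indicator C z - \<eta> z" using assms by blast
  show ?thesis
  proof (intro exI[of _ r] conjI ballI impI)
    fix y assume "y \<in> ball z r" "y \<in> C"
    then show "\<eta> y \<ge> \<eta> z" using r(2) assms(2) by force
  qed (use r in auto)
qed

lemma localmax_out:
  fixes \<eta> :: "'a::metric_space \<Rightarrow> real"
  assumes "\<exists>r>0. \<forall>y\<in>ball z r. indicator C y - \<eta> y \<le> indicator C z - \<eta> z" "z \<notin> C" "closed C"
  shows "\<exists>r>0. \<forall>y\<in>ball z r. \<eta> y \<ge> \<eta> z"
proof -
  obtain r where r: "r > 0" "\<forall>y\<in>ball z r. indicator C y - \<eta> y \<le> indicator C z - \<eta> z" using assms by blast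
  obtain r' where r': "r' > 0" "ball z r' \<subseteq> - C"
    using assms(2,3) open_contains_ball[of "- C"] by (auto simp: open_Compl)
  show ?thesis
  proof (intro exI[of _ "min r r'"] conjI ballI)
    fix y assume y: "y \<in> ball z (min r r')"
    then have "y \<notin> C" using r' by auto
    then show "\<eta> y \<ge> \<eta> z" using r(2) y assms(2) by force
  qed (use r r' in auto)
qed

lemma localmax_intro:
  fixes \<eta> :: "'a::metric_space \<Rightarrow> real"
  assumes cont: "continuous_on UNIV \<eta>" and z: "z \<in> C"
    and loc: "\<exists>r>0. \<forall>y\<in>ball z r. y \<in> C \<longrightarrow> \<eta> y \<ge> \<eta> z"
  shows "\<exists>r>0. \<forall>y\<in>ball z r. indicator C y - \<eta> y \<le> indicator C z - \<eta> z"
proof -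
  obtain r where r: "r > 0" "\<forall>y\<in>ball z r. y \<in> C \<longrightarrow> \<eta> y \<ge> \<eta> z" using loc by blast
  have "isCont \<eta> z" using cont by (simp add: continuous_on_eq_continuous_at)
  then obtain d where d: "d > 0" "\<forall>y. dist y z < d \<longrightarrow> dist (\<eta> y) (\<eta> z) < 1"
    unfolding continuous_at_eps_delta by (meson zero_less_one)
  show ?thesis
  proof (intro exI[of _ "min r d"] conjI ballI)
    show "min r d > 0" using r d by simp
    fix y assume y: "y \<in> ball z (min r d)"
    show "indicator C y - \<eta> y \<le> indicator C z - \<eta> z"
    proof (cases "y \<in> C")
      case True then show ?thesis using r y z by (auto simp: indicator_def)
    next
      case False
      have "dist (\<eta> y) (\<eta> z) < 1" using d y by (auto simp: dist_commute)
      then show ?thesis using False z by (auto simp: indicator_def dist_real_def)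
    qed
  qed
qed

lemma sgn_unit: "(P::real^'n) \<noteq> 0 \<Longrightarrow> sgn P \<bullet> sgn P = 1"
  by (simp add: sgn_div_norm inner_commute power2_norm_eq_inner[symmetric] divide_inverse)

lemma orth_sgn: "(P::real^'n) \<noteq> 0 \<Longrightarrow> v \<bullet> sgn P = 0 \<longleftrightarrow> v \<bullet> P = 0"
  by (simp add: sgn_div_norm)

lemma levelset_case:
  fixes P :: "real^'n" and M :: "real^'n^'n"
  assumes C2: "C2_test \<eta> D\<eta> H\<eta>" and P: "P \<noteq> 0" and az: "a z > 0"
    and q: "\<And>k. q (z + k) = q z + P \<bullet> k + (1/2) * (k \<bullet> (M *v k))"
    and loc: "\<exists>r>0. \<forall>y\<in>ball z r. q y > q z \<longrightarrow> \<eta> y \<ge> \<eta> z"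
    and G: "geomG a Da F z P M \<le> 0"
  shows "geomG_lower a Da F z (D\<eta> z) (H\<eta> z) \<le> 0"
proof -
  obtain \<mu> where mu: "\<mu> \<ge> 0" "D\<eta> z = \<mu> *\<^sub>R P"
     "\<forall>v. v \<bullet> P = 0 \<longrightarrow> v \<bullet> (H\<eta> z *v v) \<ge> \<mu> * (v \<bullet> (M *v v))"
    using level_set[OF C2 P q loc] by blast
  let ?u = "sgn P"
  have tr: "trace (H\<eta> z - \<mu> *\<^sub>R M) - ?u \<bullet> ((H\<eta> z - \<mu> *\<^sub>R M) *v ?u) \<ge> 0"
  proof (rule trace_proj_nonneg)
    show "?u \<bullet> ?u = 1" using P by (rule sgn_unit)
    fix v assume "v \<bullet> ?u = 0"
    then have "v \<bullet> P = 0" using orth_sgn[OF P] by simp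
    then show "v \<bullet> ((H\<eta> z - \<mu> *\<^sub>R M) *v v) \<ge> 0"
      using mu(3) by (simp add: matrix_vector_mult_diff_rdistrib inner_diff_right scaleR_matrix_vector_assoc[symmetric])
  qed
  then have tr2: "trace (H\<eta> z) - ?u \<bullet> (H\<eta> z *v ?u) \<ge> \<mu> * (trace M - ?u \<bullet> (M *v ?u))"
    by (simp add: trace_sub trace_scaleR matrix_vector_mult_diff_rdistrib inner_diff_right
        scaleR_matrix_vector_assoc[symmetric] algebra_simps)
  have "geomG_lower a Da F z (D\<eta> z) (H\<eta> z) \<le>
    ereal (- a z * (trace (H\<eta> z) - ?u \<bullet> (H\<eta> z *v ?u)) - \<mu> * (Da z \<bullet> P + F * norm P))"
    unfolding mu(2) by (rule G_lower_bound[OF P mu(1)])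
  also have "\<dots> \<le> ereal (\<mu> * geomG a Da F z P M)"
  proof -
    have "- a z * (trace (H\<eta> z) - ?u \<bullet> (H\<eta> z *v ?u)) \<le> - a z * (\<mu> * (trace M - ?u \<bullet> (M *v ?u)))"
      using tr2 az by simp
    then show ?thesis by (simp add: geomG_def algebra_simps)
  qed
  also have "\<dots> \<le> 0" using G mu(1) by (simp add: mult_nonneg_nonpos)
  finally show ?thesis .
qed

lemma locmin_case:
  fixes \<eta> :: "real^'n \<Rightarrow> real"
  assumes C2: "C2_test \<eta> D\<eta> H\<eta>" and az: "a z > 0"
    and loc: "\<exists>r>0. \<forall>y\<in>ball z r. \<eta> y \<ge> \<eta> z"
  shows "geomG_lower a Da F z (D\<eta> z) (H\<eta> z) \<le> 0"
proof -
  define P :: "real^'n" where "P = axis undefined 1"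
  have P: "P \<noteq> 0" "- P \<noteq> 0" by (simp_all add: P_def)
  have q1: "\<And>k. (\<lambda>y. P \<bullet> (y - z)) (z + k) = (\<lambda>y. P \<bullet> (y - z)) z + P \<bullet> k + (1/2) * (k \<bullet> (0 *v k))"
    by simp
  have q2: "\<And>k. (\<lambda>y. (-P) \<bullet> (y - z)) (z + k) = (\<lambda>y. (-P) \<bullet> (y - z)) z + (-P) \<bullet> k + (1/2) * (k \<bullet> (0 *v k))"
    by simp
  have loc': "\<exists>r>0. \<forall>y\<in>ball z r. Q y > Q z \<longrightarrow> \<eta> y \<ge> \<eta> z" for Q :: "real^'n \<Rightarrow> real"
    using loc by blast
  obtain \<mu> where mu: "\<mu> \<ge> 0" "D\<eta> z = \<mu> *\<^sub>R P"
     "\<forall>v. v \<bullet> P = 0 \<longrightarrow> v \<bullet> (H\<eta> z *v v) \<ge> \<mu> * (v \<bullet> ((0::real^'n^'n) *v v))"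
    using level_set[OF C2 P(1) q1 loc'] by blast
  obtain \<mu>' where mu': "\<mu>' \<ge> 0" "D\<eta> z = \<mu>' *\<^sub>R (-P)"
    using level_set[OF C2 P(2) q2 loc'] by blast
  have "\<mu> *\<^sub>R P = - (\<mu>' *\<^sub>R P)" using mu(2) mu'(2) by simp
  then have "(\<mu> + \<mu>') *\<^sub>R P = 0" by (simp add: scaleR_add_left)
  then have "\<mu> + \<mu>' = 0" using P by simp
  then have m0: "\<mu> = 0" using mu(1) mu'(1) by simp
  then have D0: "D\<eta> z = 0 *\<^sub>R P" using mu(2) by simp
  let ?u = "sgn P"
  have tr: "trace (H\<eta> z) - ?u \<bullet> (H\<eta> z *v ?u) \<ge> 0"
  proof (rule trace_proj_nonneg)
    show "?u \<bullet> ?u = 1" using P by (simp add: sgn_unit)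
    fix v assume "v \<bullet> ?u = 0"
    then have "v \<bullet> P = 0" using orth_sgn[OF P(1)] by simp
    then show "v \<bullet> (H\<eta> z *v v) \<ge> 0" using mu(3) m0 by simp
  qed
  have "geomG_lower a Da F z (D\<eta> z) (H\<eta> z) \<le>
    ereal (- a z * (trace (H\<eta> z) - ?u \<bullet> (H\<eta> z *v ?u)) - 0 * (Da z \<bullet> P + F * norm P))"
    unfolding D0 by (rule G_lower_bound[OF P(1)]) simp
  also have "\<dots> \<le> 0" using tr az by (simp add: mult_nonneg_nonneg)
  finally show ?thesis .
qed

lemma quad_shift:
  fixes M :: "real^'n^'n"
  shows "p \<bullet> (z + k - x0) + (1/2) * ((z + k - x0) \<bullet> (M *v (z + k - x0))) =
    (p \<bullet> (z - x0) + (1/2) * ((z - x0) \<bullet> (M *v (z - x0))))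
    + (p + ((1/2) *\<^sub>R (M + transpose M)) *v (z - x0)) \<bullet> k + (1/2) * (k \<bullet> (M *v k))"
proof -
  define h where "h = z - x0"
  have e: "z + k - x0 = h + k" by (simp add: h_def algebra_simps)
  have t: "(transpose M *v h) \<bullet> k = h \<bullet> (M *v k)" by (simp add: dot_lmul_matrix)
  show ?thesis unfolding e h_def[symmetric]
    by (simp add: algebra_simps inner_add_left inner_add_right matrix_vector_mult_add_rdistrib
        matrix_vector_right_distrib t inner_commute[of "M *v h" k] scaleR_matrix_vector_assoc[symmetric]
        del: transpose_matrix_vector)
qed

lemma quad_cont:
  fixes M :: "real^'n^'n"
  shows "continuous_on UNIV (\<lambda>y. p \<bullet> (y - x0) + (1/2) * ((y - x0) \<bullet> (M *v (y - x0))))"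
proof -
  have "continuous_on UNIV (\<lambda>y. M *v (y - x0))"
    by (rule bounded_linear.continuous_on[OF matrix_vector_mul_bounded_linear]) (intro continuous_intros)
  then show ?thesis by (intro continuous_intros) auto
qed

lemma quad_sym:
  fixes M :: "real^'n^'n"
  shows "h \<bullet> (((1/2) *\<^sub>R (M + transpose M)) *v h) = h \<bullet> (M *v h)"
proof -
  have t: "h \<bullet> (transpose M *v h) = h \<bullet> (M *v h)"
    by (metis dot_lmul_matrix inner_commute transpose_matrix_vector vector_transpose_matrix transpose_transpose)
  show ?thesis using t
    by (simp add: matrix_vector_mult_add_rdistrib inner_add_right scaleR_matrix_vector_assoc[symmetric] del: transpose_matrix_vector)
qed

lemma visc_subD:
  assumes "visc_sub a Da F u" "C2_test \<phi> D\<phi> H\<phi>"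
    "\<exists>r>0. \<forall>y\<in>ball x0 r. u y - \<phi> y \<le> u x0 - \<phi> x0"
  shows "geomG_lower a Da F x0 (D\<phi> x0) (H\<phi> x0) \<le> 0"
  using assms unfolding visc_sub_def by blast

lemma union_sub:
  fixes SS :: "(real^'n) set set"
  assumes az: "\<And>x. a x > 0"
    and subs: "\<And>G. G \<in> SS \<Longrightarrow> visc_sub a Da F (indicator (closure G))"
  shows "visc_sub a Da F (indicator (closure (\<Union>SS)))"
  unfolding visc_sub_def
proof (intro conjI allI impI)
  let ?E = "\<Union>SS"
  show "usc (indicator (closure ?E) :: real^'n \<Rightarrow> real)" by (rule usc_closed) simp
  fix \<eta> :: "real^'n \<Rightarrow> real" and D\<eta> H\<eta> z
  assume A: "C2_test \<eta> D\<eta> H\<eta> \<and> (\<exists>r>0. \<forall>y\<in>ball z r.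
      indicator (closure ?E) y - \<eta> y \<le> indicator (closure ?E) z - \<eta> z)"
  then have C2: "C2_test \<eta> D\<eta> H\<eta>" and lm: "\<exists>r>0. \<forall>y\<in>ball z r.
      indicator (closure ?E) y - \<eta> y \<le> indicator (closure ?E) z - \<eta> z" by auto
  show "geomG_lower a Da F z (D\<eta> z) (H\<eta> z) \<le> 0"
  proof (cases "z \<in> closure ?E")
    case False
    show ?thesis by (rule locmin_case[OF C2 az localmax_out[OF lm False closed_closure]])
  next
    case True
    obtain r where r: "r > 0" "\<forall>y\<in>ball z r. y \<in> closure ?E \<longrightarrow> \<eta> y \<ge> \<eta> z"
      using localmax_in[OF lm True] by blast
    let ?S = "{(y, q, Y). q \<noteq> (0::real^'n)} :: ((real^'n) \<times> (real^'n) \<times> (real^'n^'n)) set"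
    let ?f = "\<lambda>(y, q, Y). ereal (geomG a Da F y q Y)"
    have C1: "geomG_lower a Da F z (D\<eta> z) (H\<eta> z + (2 * \<epsilon>) *\<^sub>R mat 1) \<le> 0" if e: "\<epsilon> > 0" for \<epsilon>
    proof -
      define \<eta>' where "\<eta>' y = \<eta> y + \<epsilon> * ((y - z) \<bullet> (y - z))" for y
      define D\<eta>' where "D\<eta>' y = D\<eta> y + (2 * \<epsilon>) *\<^sub>R (y - z)" for y
      define H\<eta>' where "H\<eta>' y = H\<eta> y + (2 * \<epsilon>) *\<^sub>R (mat 1 :: real^'n^'n)" for y
      have C2': "C2_test \<eta>' D\<eta>' H\<eta>'"
        unfolding \<eta>'_def D\<eta>'_def H\<eta>'_def by (rule C2_perturb[OF C2])
      have "geomG_lower a Da F z (D\<eta>' z) (H\<eta>' z) \<le> 0"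
        unfolding geomG_lower_def
      proof (rule Liminf_at_within_lsc)
        fix U assume U: "open U" "(z, D\<eta>' z, H\<eta>' z) \<in> U"
        define \<Phi> where "\<Phi> y = (y, D\<eta>' y, H\<eta>' y)" for y
        have "continuous_on UNIV D\<eta>'" by (rule C2_contD[OF C2'])
        moreover have "continuous_on UNIV H\<eta>'" using C2' by (simp add: C2_test_def)
        ultimately have "continuous_on UNIV \<Phi>"
          unfolding \<Phi>_def by (intro continuous_intros) auto
        then have "open (\<Phi> -` U)" using U(1) by (intro open_vimage)
        moreover have "z \<in> \<Phi> -` U" using U(2) by (simp add: \<Phi>_def)
        ultimately obtain \<rho> where \<rho>: "\<rho> > 0" "ball z \<rho> \<subseteq> \<Phi> -` U"
          using open_contains_ball by metis
        define \<sigma> where "\<sigma> = min \<rho> r / 2"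
        have \<sigma>: "\<sigma> > 0" "\<sigma> < \<rho>" "\<sigma> < r" using \<rho> r by (auto simp: \<sigma>_def)
        have "isCont \<eta>' z" using C2_cont[OF C2'] by (simp add: continuous_on_eq_continuous_at)
        moreover have "\<epsilon> * \<sigma>^2 / 4 > 0" using e \<sigma> by simp
        ultimately obtain \<delta> where \<delta>: "\<delta> > 0" "\<forall>y. dist y z < \<delta> \<longrightarrow> dist (\<eta>' y) (\<eta>' z) < \<epsilon> * \<sigma>^2 / 4"
          unfolding continuous_at_eps_delta by blast
        have "min \<delta> \<sigma> > 0" using \<delta>(1) \<sigma>(1) by simp
        then obtain z' where z': "z' \<in> ?E" "dist z' z < min \<delta> \<sigma>"
          using True unfolding closure_approachable by blast
        then obtain G where G: "G \<in> SS" "z' \<in> G" by blast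
        define K where "K = closure G \<inter> cball z \<sigma>"
        have Kc: "compact K" unfolding K_def by (intro closed_Int_compact) auto
        have z'K: "z' \<in> K" using z' G closure_subset by (auto simp: K_def dist_commute)
        have "continuous_on K \<eta>'" using C2_cont[OF C2'] continuous_on_subset by blast
        then obtain y where y: "y \<in> K" "\<forall>y''\<in>K. \<eta>' y \<le> \<eta>' y''"
          using continuous_attains_inf[OF Kc _] z'K by blast
        have "\<eta>' y \<le> \<eta>' z'" using y z'K by blast
        also have "\<eta>' z' < \<eta>' z + \<epsilon> * \<sigma>^2 / 4"
        proof -
          have "dist (\<eta>' z') (\<eta>' z) < \<epsilon> * \<sigma>^2 / 4" using \<delta>(2) z'(2) by simp
          then show ?thesis unfolding dist_real_def by linarith
        qed
        finally have y1: "\<eta>' y < \<eta> z + \<epsilon> * \<sigma>^2 / 4" by (simp add: \<eta>'_def)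
        have yE: "y \<in> closure ?E" using y(1) G(1) closure_mono[of G ?E] by (auto simp: K_def)
        have "dist z y \<le> \<sigma>" using y(1) by (simp add: K_def)
        then have "y \<in> ball z r" using \<sigma> by simp
        then have "\<eta> y \<ge> \<eta> z" using r yE by blast
        then have "\<epsilon> * ((y - z) \<bullet> (y - z)) < \<epsilon> * (\<sigma> / 2)^2" using y1 by (simp add: \<eta>'_def power2_eq_square)
        then have "(y - z) \<bullet> (y - z) < (\<sigma> / 2)^2" using e by simp
        then have "(norm (y - z))^2 < (\<sigma> / 2)^2" by (simp add: power2_norm_eq_inner)
        then have yz: "norm (y - z) < \<sigma> / 2" by (rule power2_less_imp_less) (use \<sigma> in simp)
        have lmy: "\<exists>r>0. \<forall>y''\<in>ball y r. indicator (closure G) y'' - \<eta>' y'' \<le> indicator (closure G) y - \<eta>' y"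
        proof (rule localmax_intro[OF C2_cont[OF C2']])
          show "y \<in> closure G" using y(1) by (simp add: K_def)
          show "\<exists>r>0. \<forall>y''\<in>ball y r. y'' \<in> closure G \<longrightarrow> \<eta>' y'' \<ge> \<eta>' y"
          proof (intro exI[of _ "\<sigma> / 2"] conjI ballI impI)
            fix y'' assume y'': "y'' \<in> ball y (\<sigma> / 2)" "y'' \<in> closure G"
            have "dist z y'' \<le> dist z y + dist y y''" by (rule dist_triangle)
            also have "\<dots> < \<sigma>" using yz y'' by (simp add: dist_norm norm_minus_commute)
            finally have "y'' \<in> K" using y'' by (simp add: K_def)
            then show "\<eta>' y'' \<ge> \<eta>' y" using y(2) by blast
          qed (use \<sigma> in simp)
        qed
        have "geomG_lower a Da F y (D\<eta>' y) (H\<eta>' y) \<le> 0"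
          by (rule visc_subD[OF subs[OF G(1)] C2' lmy])
        moreover have "\<Phi> y \<in> U"
        proof -
          have "dist z y < \<rho>" using yz \<sigma> by (simp add: dist_norm norm_minus_commute)
          then show ?thesis using \<rho>(2) by auto
        qed
        ultimately show "\<exists>x\<in>U. Liminf (at x within ?S) ?f \<le> 0"
          unfolding geomG_lower_def \<Phi>_def by (intro bexI)
      qed
      then show ?thesis by (simp add: D\<eta>'_def H\<eta>'_def)
    qed
    show ?thesis
      unfolding geomG_lower_def
    proof (rule Liminf_at_within_lsc)
      fix U assume U: "open U" "(z, D\<eta> z, H\<eta> z) \<in> U"
      have "((\<lambda>\<epsilon>. (z, D\<eta> z, H\<eta> z + (2 * \<epsilon>) *\<^sub>R (mat 1 :: real^'n^'n))) \<longlongrightarrow>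
          (z, D\<eta> z, H\<eta> z + (2 * 0) *\<^sub>R (mat 1 :: real^'n^'n))) (at_right 0)"
        by (intro tendsto_intros)
      then have "((\<lambda>\<epsilon>. (z, D\<eta> z, H\<eta> z + (2 * \<epsilon>) *\<^sub>R (mat 1 :: real^'n^'n))) \<longlongrightarrow> (z, D\<eta> z, H\<eta> z)) (at_right 0)"
        by simp
      then have "\<forall>\<^sub>F \<epsilon> in at_right 0. (z, D\<eta> z, H\<eta> z + (2 * \<epsilon>) *\<^sub>R (mat 1 :: real^'n^'n)) \<in> U"
        using U by (rule topological_tendstoD)
      moreover have "\<forall>\<^sub>F \<epsilon> in at_right (0::real). \<epsilon> > 0" by (rule eventually_at_right_less)
      ultimately have "\<forall>\<^sub>F \<epsilon> in at_right (0::real). \<epsilon> > 0 \<and> (z, D\<eta> z, H\<eta> z + (2 * \<epsilon>) *\<^sub>R (mat 1 :: real^'n^'n)) \<in> U"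
        by eventually_elim auto
      from eventually_happens[OF this] obtain \<epsilon> where
        \<epsilon>: "\<epsilon> > 0" "(z, D\<eta> z, H\<eta> z + (2 * \<epsilon>) *\<^sub>R (mat 1 :: real^'n^'n)) \<in> U"
        by auto
      have "Liminf (at (z, D\<eta> z, H\<eta> z + (2 * \<epsilon>) *\<^sub>R (mat 1 :: real^'n^'n)) within ?S) ?f \<le> 0"
        using C1[OF \<epsilon>(1)] unfolding geomG_lower_def .
      then show "\<exists>x\<in>U. Liminf (at x within ?S) ?f \<le> 0"
        using \<epsilon>(2) by (intro bexI)
    qed
  qed
qed

lemma visc_superD:
  assumes "visc_super a Da F u" "C2_test \<phi> D\<phi> H\<phi>"
    "\<exists>r>0. \<forall>y\<in>ball x0 r. u y - \<phi> y \<ge> u x0 - \<phi> x0"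
  shows "geomG_upper a Da F x0 (D\<phi> x0) (H\<phi> x0) \<ge> 0"
  using assms unfolding visc_super_def by blast

theorem propositionA1:
  fixes a :: "real^'n \<Rightarrow> real" and Da :: "real^'n \<Rightarrow> real^'n"
    and \<Lambda> F :: real and Eup Elow :: "(real^'n) set"
  assumes d: "CARD('n) \<ge> 2"
    and Lam: "\<Lambda> > 1"
    and a_per: "Zd_periodic a"
    and a_C1: "\<forall>x. (a has_derivative (\<lambda>h. Da x \<bullet> h)) (at x)" "continuous_on UNIV Da"
    and a_range: "\<forall>x. 1 \<le> a x \<and> a x \<le> \<Lambda>"
    and opens: "open Eup" "open Elow"
    and incl: "closure Elow \<subseteq> Eup"
    and regular: "closure (- closure Eup) = - Eup"
    and super: "visc_super a Da F (indicator Eup)"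
    and sub: "visc_sub a Da F (indicator (closure Elow))"
  shows "\<exists>E. open E \<and> Elow \<subseteq> E \<and> E \<subseteq> Eup \<and> visc_solution_disc a Da F (indicator E)"
proof -
  have az: "a x > 0" for x using a_range by (meson less_le_trans zero_less_one)
  define SS where "SS = {G. open G \<and> Elow \<subseteq> G \<and> G \<subseteq> Eup \<and> visc_sub a Da F (indicator (closure G))}"
  define E where "E = \<Union>SS"
  have low: "Elow \<in> SS" using opens incl closure_subset sub by (auto simp: SS_def)
  have openE: "open E" unfolding E_def SS_def by auto
  have lowE: "Elow \<subseteq> E" using low unfolding E_def by auto
  have upE: "E \<subseteq> Eup" unfolding E_def SS_def by auto
  have subE: "visc_sub a Da F (indicator (closure E))"
    unfolding E_def by (rule union_sub[OF az]) (auto simp: SS_def)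
  have maxE: "G \<subseteq> E" if "open G" "Elow \<subseteq> G" "G \<subseteq> Eup" "visc_sub a Da F (indicator (closure G))" for G
    using that unfolding E_def SS_def by auto
  let ?S = "{(y, q, Y). q \<noteq> (0::real^'n)} :: ((real^'n) \<times> (real^'n) \<times> (real^'n^'n)) set"
  let ?f = "\<lambda>(y, q, Y). ereal (geomG a Da F y q Y)"
  have superE: "visc_super a Da F (indicator E)"
    unfolding visc_super_def
  proof (intro conjI allI impI)
    show "lsc (indicator E :: real^'n \<Rightarrow> real)" by (rule lsc_open[OF openE])
    fix \<phi> :: "real^'n \<Rightarrow> real" and D\<phi> H\<phi> x0
    assume A: "C2_test \<phi> D\<phi> H\<phi> \<and> (\<exists>r>0. \<forall>y\<in>ball x0 r. indicator E y - \<phi> y \<ge> indicator E x0 - \<phi> x0)"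
    then have C2: "C2_test \<phi> D\<phi> H\<phi>" and lm: "\<exists>r>0. \<forall>y\<in>ball x0 r. indicator E y - \<phi> y \<ge> indicator E x0 - \<phi> x0"
      by auto
    show "geomG_upper a Da F x0 (D\<phi> x0) (H\<phi> x0) \<ge> 0"
    proof (cases "x0 \<in> E \<or> x0 \<notin> Eup")
      case True
      have "\<exists>r>0. \<forall>y\<in>ball x0 r. indicator Eup y - \<phi> y \<ge> indicator Eup x0 - \<phi> x0"
      proof -
        obtain r where r: "r > 0" "\<forall>y\<in>ball x0 r. indicator E y - \<phi> y \<ge> indicator E x0 - \<phi> x0" using lm by blast
        have e1: "indicator Eup x0 = (indicator E x0 :: real)" using True upE by (auto simp: indicator_def)
        have e2: "indicator E y \<le> (indicator Eup y :: real)" for y using upE by (auto simp: indicator_def)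
        show ?thesis
        proof (intro exI[of _ r] conjI ballI)
          fix y assume "y \<in> ball x0 r"
          then have "indicator E y - \<phi> y \<ge> indicator E x0 - \<phi> x0" using r(2) by blast
          then show "indicator Eup y - \<phi> y \<ge> indicator Eup x0 - \<phi> x0" using e1 e2[of y] by linarith
        qed (rule r(1))
      qed
      then show ?thesis by (rule visc_superD[OF super C2])
    next
      case False
      then have x0E: "x0 \<notin> E" and x0up: "x0 \<in> Eup" by auto
      show ?thesis
      proof (rule ccontr)
        define p where "p = D\<phi> x0"
        define X where "X = H\<phi> x0"
        assume "\<not> ?thesis"
        then have "geomG_upper a Da F x0 p X < 0" by (simp add: p_def X_def)
        from Limsup_lessD[OF this[unfolded geomG_upper_def]]
        have "\<forall>\<^sub>F w in at (x0, p, X) within ?S. ?f w < 0" .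
        then obtain N where N: "open N" "(x0, p, X) \<in> N" "\<forall>w\<in>N. w \<noteq> (x0, p, X) \<longrightarrow> w \<in> ?S \<longrightarrow> ?f w < 0"
          unfolding eventually_at_topological by blast
        obtain e where e: "e > 0" "ball (x0, p, X) e \<subseteq> N" using N open_contains_ball by blast
        define c1 where "c1 = norm (mat 1 :: real^'n^'n)"
        define \<kappa> where "\<kappa> = min 1 (e / (3 * (c1 + 1)))"
        have c1: "c1 \<ge> 0" by (simp add: c1_def)
        have \<kappa>: "\<kappa> > 0" "\<kappa> \<le> 1" "\<kappa> * c1 < e / 3"
        proof -
          show "\<kappa> > 0" using e c1 by (simp add: \<kappa>_def)
          show "\<kappa> \<le> 1" by (simp add: \<kappa>_def)
          have "\<kappa> * c1 \<le> e / (3 * (c1 + 1)) * c1" using c1 by (intro mult_right_mono) (auto simp: \<kappa>_def)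
          also have "\<dots> < e / 3" using e c1 by (simp add: field_simps)
          finally show "\<kappa> * c1 < e / 3" .
        qed
        define M where "M = X - \<kappa> *\<^sub>R (mat 1 :: real^'n^'n)"
        define Ms where "Ms = (1/2) *\<^sub>R (M + transpose M)"
        obtain K where K: "K > 0" "\<And>h. norm (Ms *v h) \<le> norm h * K"
          using bounded_linear.pos_bounded[OF matrix_vector_mul_bounded_linear[of Ms]] by blast
        obtain \<rho>1 where \<rho>1: "\<rho>1 > 0" "\<forall>h. norm h < \<rho>1 \<longrightarrow>
            \<bar>\<phi> (x0 + h) - \<phi> x0 - D\<phi> x0 \<bullet> h - (1/2) * (h \<bullet> (H\<phi> x0 *v h))\<bar> \<le> \<kappa>/4 * (norm h)^2"
          using taylor2[OF C2, of "\<kappa>/4" x0] \<kappa> by auto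
        obtain r1 where r1: "r1 > 0" "\<forall>y\<in>ball x0 r1. indicator E y - \<phi> y \<ge> indicator E x0 - \<phi> x0"
          using lm by blast
        obtain r2 where r2: "r2 > 0" "ball x0 r2 \<subseteq> Eup" using opens(1) x0up open_contains_ball by blast
        define r0 where "r0 = min (min r1 \<rho>1) (min r2 (min (e / (3 * (K + 1))) (min (e / 3)
           (if p = 0 then 1 else norm p / (K + 1)))))"
        have r0: "r0 > 0" using r1 \<rho>1 r2 e K by (auto simp: r0_def)
        define r where "r = r0 / 2"
        have r: "r > 0" "r < r1" "r < \<rho>1" "r < r2" "r < e / (3 * (K + 1))" "r < e / 3"
          "p \<noteq> 0 \<Longrightarrow> r < norm p / (K + 1)"
        proof -
          have le: "r0 \<le> r1" "r0 \<le> \<rho>1" "r0 \<le> r2" "r0 \<le> e / (3 * (K + 1))" "r0 \<le> e / 3"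
            "p \<noteq> 0 \<Longrightarrow> r0 \<le> norm p / (K + 1)"
            unfolding r0_def by (meson min.coboundedI1 min.coboundedI2 order_refl, simp)+
          have "r < r0" "r > 0" using r0 by (simp_all add: r_def)
          then show "r > 0" "r < r1" "r < \<rho>1" "r < r2" "r < e / (3 * (K + 1))" "r < e / 3"
            "p \<noteq> 0 \<Longrightarrow> r < norm p / (K + 1)" using le by linarith+
        qed
        define q where "q y = p \<bullet> (y - x0) + (1/2) * ((y - x0) \<bullet> (M *v (y - x0)))" for y
        define \<delta> where "\<delta> = \<kappa> * r^2 / 8"
        have \<delta>: "\<delta> > 0" using \<kappa> r by (simp add: \<delta>_def)
        define B where "B = ball x0 r \<inter> {y. - \<delta> < q y}"
        define E' where "E' = E \<union> B"
        have qx0: "q x0 = 0" by (simp add: q_def)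
        have x0B: "x0 \<in> B" using r \<delta> qx0 by (simp add: B_def)
        have qcont: "continuous_on UNIV q" unfolding q_def by (rule quad_cont)
        have openB: "open B" unfolding B_def
          by (intro open_Int open_ball open_Collect_less continuous_intros qcont)
        have qshift: "q (z + k) = q z + (p + Ms *v (z - x0)) \<bullet> k + (1/2) * (k \<bullet> (M *v k))" for z k
          unfolding q_def Ms_def by (rule quad_shift)
        have f1: "q y \<le> - (\<kappa> / 4) * (norm (y - x0))^2" if y: "dist x0 y \<le> r" "y \<notin> E" for y
        proof -
          define h where "h = y - x0"
          have nh: "norm h < r1" "norm h < \<rho>1" using y r by (auto simp: h_def dist_norm norm_minus_commute)
          have "y \<in> ball x0 r1" using nh by (simp add: h_def dist_norm norm_minus_commute)
          then have py: "\<phi> y \<le> \<phi> x0" using r1(2) y(2) x0E by force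
          let ?T = "\<phi> (x0 + h) - \<phi> x0 - p \<bullet> h - (1/2) * (h \<bullet> (X *v h))"
          have bd: "\<bar>?T\<bar> \<le> \<kappa>/4 * (norm h)^2"
            using \<rho>1(2) nh by (simp add: p_def X_def)
          have T: "- ?T \<le> \<kappa>/4 * (norm h)^2" using bd abs_ge_minus_self[of ?T] by linarith
          have qy: "q y = p \<bullet> h + (1/2) * (h \<bullet> (X *v h)) - (\<kappa>/2) * (norm h)^2"
            by (simp add: q_def h_def M_def matrix_vector_mult_diff_rdistrib inner_diff_right
                scaleR_matrix_vector_assoc[symmetric] power2_norm_eq_inner algebra_simps)
          have xh: "x0 + h = y" by (simp add: h_def)
          have "q y \<le> - (\<kappa> / 4) * (norm h)^2" using T py qy unfolding xh by linarith
          then show ?thesis by (simp add: h_def)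
        qed
        have subE': "visc_sub a Da F (indicator (closure E'))"
          unfolding visc_sub_def
        proof (intro conjI allI impI)
          show "usc (indicator (closure E') :: real^'n \<Rightarrow> real)" by (rule usc_closed) simp
          fix \<eta> :: "real^'n \<Rightarrow> real" and D\<eta> H\<eta> z
          assume A: "C2_test \<eta> D\<eta> H\<eta> \<and> (\<exists>r>0. \<forall>y\<in>ball z r.
              indicator (closure E') y - \<eta> y \<le> indicator (closure E') z - \<eta> z)"
          then have C2e: "C2_test \<eta> D\<eta> H\<eta>" and lme: "\<exists>r>0. \<forall>y\<in>ball z r.
              indicator (closure E') y - \<eta> y \<le> indicator (closure E') z - \<eta> z" by auto
          show "geomG_lower a Da F z (D\<eta> z) (H\<eta> z) \<le> 0"
          proof (cases "z \<in> closure E'")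
            case False
            show ?thesis by (rule locmin_case[OF C2e az localmax_out[OF lme False closed_closure]])
          next
            case True
            obtain r' where r': "r' > 0" "\<forall>y\<in>ball z r'. y \<in> closure E' \<longrightarrow> \<eta> y \<ge> \<eta> z"
              using localmax_in[OF lme True] by blast
            show ?thesis
            proof (cases "z \<in> closure E")
              case True
              have "\<exists>r>0. \<forall>y\<in>ball z r. indicator (closure E) y - \<eta> y \<le> indicator (closure E) z - \<eta> z"
              proof (rule localmax_intro[OF C2_cont[OF C2e] True])
                have "closure E \<subseteq> closure E'" by (rule closure_mono) (simp add: E'_def)
                then show "\<exists>r>0. \<forall>y\<in>ball z r. y \<in> closure E \<longrightarrow> \<eta> y \<ge> \<eta> z" using r' by blast
              qed
              then show ?thesis by (rule visc_subD[OF subE C2e])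
            next
              case zE: False
              have "z \<in> closure B" using True zE by (simp add: E'_def closure_Un)
              moreover have "closure B \<subseteq> cball x0 r \<inter> {y. - \<delta> \<le> q y}"
                by (rule closure_minimal) (auto simp: B_def intro!: closed_Int closed_Collect_le continuous_intros qcont)
              ultimately have zB: "dist x0 z \<le> r" "- \<delta> \<le> q z" by auto
              have zE': "z \<notin> E" using zE closure_subset by blast
              have "q z \<le> - (\<kappa> / 4) * (norm (z - x0))^2" by (rule f1[OF zB(1) zE'])
              then have "(\<kappa> / 4) * (norm (z - x0))^2 \<le> \<kappa> * r^2 / 8" using zB(2) by (simp add: \<delta>_def)
              then have "(norm (z - x0))^2 \<le> r^2 / 2" using \<kappa> by (simp add: field_simps)
              also have "\<dots> < r^2" using r by simp
              finally have "norm (z - x0) < r" by (rule power2_less_imp_less) (use r in simp)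
              then have zball: "dist x0 z < r" by (simp add: dist_norm norm_minus_commute)
              show ?thesis
              proof (cases "- \<delta> < q z")
                case True
                then have "z \<in> B" using zball by (simp add: B_def)
                then obtain r'' where r'': "r'' > 0" "ball z r'' \<subseteq> B" using openB open_contains_ball by blast
                have "\<forall>y\<in>ball z (min r' r''). \<eta> y \<ge> \<eta> z"
                proof
                  fix y assume y: "y \<in> ball z (min r' r'')"
                  then have "y \<in> B" using r'' by auto
                  then have "y \<in> closure E'" using closure_subset by (auto simp: E'_def)
                  then show "\<eta> y \<ge> \<eta> z" using r' y by auto
                qed
                then show ?thesis using r' r'' by (intro locmin_case[OF C2e az]) (auto intro!: exI[of _ "min r' r''"])
              next
                case False
                then have qz: "q z = - \<delta>" using zB(2) by simp
                define h where "h = z - x0"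
                define P where "P = p + Ms *v h"
                have zx0: "z \<noteq> x0" using qz qx0 \<delta> by auto
                have nh: "norm h < r" using zball by (simp add: h_def dist_norm norm_minus_commute)
                have P0: "P \<noteq> 0"
                proof (cases "p = 0")
                  case True
                  show ?thesis
                  proof
                    assume "P = 0"
                    then have "Ms *v h = 0" using True by (simp add: P_def)
                    then have "h \<bullet> (Ms *v h) = 0" by simp
                    then have "h \<bullet> (M *v h) = 0" unfolding Ms_def quad_sym .
                    then have "q z = 0" using True by (simp add: q_def h_def)
                    then show False using qz \<delta> by simp
                  qed
                next
                  case False
                  have "norm (Ms *v h) \<le> norm h * K" by (rule K(2))
                  also have "\<dots> \<le> r * K" using nh K by (intro mult_right_mono) auto
                  also have "\<dots> < norm p"
                  proof -
                    have "r * (K + 1) < norm p" using r(7)[OF False] K by (simp add: pos_less_divide_eq)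
                    then show ?thesis using r K by (simp add: algebra_simps)
                  qed
                  finally have "norm (Ms *v h) < norm p" .
                  then show ?thesis unfolding P_def
                    by (metis add.commute add_diff_cancel diff_zero norm_minus_commute order_less_irrefl)
                qed
                have loc: "\<exists>r>0. \<forall>y\<in>ball z r. q y > q z \<longrightarrow> \<eta> y \<ge> \<eta> z"
                proof (intro exI[of _ "min r' (r - dist x0 z)"] conjI ballI impI)
                  show "min r' (r - dist x0 z) > 0" using r' zball by simp
                  fix y assume y: "y \<in> ball z (min r' (r - dist x0 z))" "q y > q z"
                  have "dist x0 y \<le> dist x0 z + dist z y" by (rule dist_triangle)
                  then have "dist x0 y < r" using y(1) by simp
                  then have "y \<in> B" using y(2) qz by (simp add: B_def)
                  then have "y \<in> closure E'" using closure_subset by (auto simp: E'_def)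
                  then show "\<eta> y \<ge> \<eta> z" using r' y(1) by auto
                qed
                have qsh: "q (z + k) = q z + P \<bullet> k + (1/2) * (k \<bullet> (M *v k))" for k
                  using qshift[of z k] by (simp add: P_def h_def)
                have Gneg: "geomG a Da F z P M \<le> 0"
                proof -
                  have "dist (z, P, M) (x0, p, X) \<le> dist z x0 + dist P p + dist M X" by (rule dist3_le)
                  also have "\<dots> < e / 3 + e / 3 + e / 3"
                  proof -
                    have "dist z x0 < e / 3" using zball r by (simp add: dist_commute)
                    moreover have "dist P p < e / 3"
                    proof -
                      have "dist P p = norm (Ms *v h)" by (simp add: P_def dist_norm)
                      also have "\<dots> \<le> norm h * K" by (rule K(2))
                      also have "\<dots> \<le> r * K" using nh K by (intro mult_right_mono) auto
                      also have "\<dots> < e / 3"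
                      proof -
                        have "r * (3 * (K + 1)) < e" using r(5) K by (simp add: pos_less_divide_eq)
                        then show ?thesis using r K by (simp add: algebra_simps)
                      qed
                      finally show ?thesis .
                    qed
                    moreover have "dist M X = \<kappa> * c1" using \<kappa> by (simp add: M_def dist_norm c1_def)
                    ultimately show ?thesis using \<kappa> by linarith
                  qed
                  finally have "(z, P, M) \<in> ball (x0, p, X) e" by (simp add: dist_commute)
                  then have "(z, P, M) \<in> N" using e by blast
                  moreover have "(z, P, M) \<noteq> (x0, p, X)" using zx0 by simp
                  moreover have "(z, P, M) \<in> ?S" using P0 by simp
                  ultimately have "?f (z, P, M) < 0" using N(3) by blast
                  then show ?thesis by simp
                qed
                show ?thesis by (rule levelset_case[OF C2e P0 az qsh loc Gneg])
              qed
            qed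
          qed
        qed
        have "E' \<subseteq> E"
        proof (rule maxE)
          show "open E'" unfolding E'_def using openE openB by auto
          show "Elow \<subseteq> E'" using lowE by (auto simp: E'_def)
          have "B \<subseteq> Eup" using r r2 by (auto simp: B_def)
          then show "E' \<subseteq> Eup" using upE by (auto simp: E'_def)
          show "visc_sub a Da F (indicator (closure E'))" by (rule subE')
        qed
        then show False using x0B x0E by (auto simp: E'_def)
      qed
    qed
  qed
  show ?thesis
  proof (intro exI[of _ E] conjI openE lowE upE)
    show "visc_solution_disc a Da F (indicator E)"
      unfolding visc_solution_disc_def usc_env_ind lsc_env_ind[OF openE]
      using subE superE by simp
  qed
qed

end
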